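(* (Model A) Let $d\ge 3$ and assume $\mathbb{E}(\xi(0))\neq 0$. Then there exists no shift-covariant random gradient Gibbs measure $\xi\mapsto\mu[\xi]$ with $\mathbb{E}\big|\int\mu[\xi](\mathrm{d}\eta)\,V'(\eta(b))\big|<\infty$ for all bonds $b\in(\mathbb{Z}^d)^*$.
   Context: Model A: $V\in C^2(\mathbb{R})$ is even, with $V(s)\ge As^2-B$ for all $s$ (some $A>0$, $B\in\mathbb{R}$) and $V''(s)\le C_2$ (some $C_2>0$). The disorder $(\xi(x))_{x\in\mathbb{Z}^d}$ is an i.i.d. family of real random variables with finite nonzero second moment, on a probability space with law $\mathbb P$, expectation $\mathbb E$. For finite $\Lambda\subset\mathbb{Z}^d$, $\partial\Lambda=\{x\notin\Lambda:\|x-y\|_1=1\text{ for some }y\in\Lambda\}$; for boundary condition $\psi\in\mathbb{R}^{\mathbb{Z}^d}$, $$H^\psi_\Lambda[\xi](\phi)=\tfrac12\sum_{x,y\in\Lambda,|x-y|=1}V(\phi(x)-\phi(y))+\sum_{x\in\Lambda,y\in\partial\Lambda,|x-y|=1}V(\phi(x)-\psi(y))+\tfrac12\sum_{x\in\Lambda}\xi(x)\phi(x)$$ (sums over ordered nearest-neighbour pairs), and $\nu^\psi_\Lambda[\xi](\mathrm{d}\phi)=\frac1{Z}e^{-H^\psi_\Lambda[\xi](\phi)}\prod_{x\in\Lambda}\mathrm{d}\phi(x)\prod_{x\notin\Lambda}\delta_{\psi(x)}(\mathrm{d}\phi(x))$. $(\mathbb{Z}^d)^*$ is the set of directed nearest-neighbour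 bonds $b=(x_b,y_b)$, $\nabla\phi(b)=\phi(y_b)-\phi(x_b)$, $\chi$ the set of $\eta\in\mathbb{R}^{(\mathbb{Z}^d)^*}$ satisfying $\eta(-b)=-\eta(b)$ and summing to zero around every plaquette (the gradient fields). $C_b(\chi)$: bounded functions continuous in each bond coordinate. $\mu^\rho_\Lambda[\xi]$ ($\rho\in\chi$) is the image of $\nu^\psi_\Lambda[\xi]$ under $\phi\mapsto\nabla\phi$ for any $\psi$ with $\nabla\psi=\rho$. A gradient Gibbs measure is a probability measure $\mu$ on $\chi$ with $\int\mu(\mathrm{d}\rho)\int\mu^\rho_\Lambda[\xi](\mathrm{d}\eta)F(\eta)=\int\mu(\mathrm{d}\eta)F(\eta)$ for all finite $\Lambda$ and $F\in C_b(\chi)$. With $(\tau_v\eta)(b)=\eta(b-v)$ and $(\tau_v\xi)(y)=\xi(y-v)$, a shift-covariant random gradient Gibbs measure is a measurable map $\xi\mapsto\mu[\xi]$ with $\mu[\xi]$ a gradient Gibbs measure for $\mathbb P$-a.e. $\xi$ and $\int\mu[\tau_v\xi](\mathrm{d}\eta)F(\eta)=\int\mu[\xi](\mathrm{d}\eta)F(\tau_v\eta)$ for all $v\in\mathbb{Z}^d$, $F\in C_b(\chi)$. *)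

theory Defs
  imports "HOL-Probability.Probability"
begin

text \<open>Lattice sites of Z^d are functions 'd => int for a finite index type 'd (d = CARD('d)).
  Directed nearest-neighbour bonds are pairs of sites at l1-distance 1.\<close>

type_synonym 'd site = "'d \<Rightarrow> int"
type_synonym 'd bond = "'d site \<times> 'd site"

definition vadd :: "'d site \<Rightarrow> 'd site \<Rightarrow> 'd site" where
  "vadd x v = (\<lambda>k. x k + v k)"

definition vsub :: "'d site \<Rightarrow> 'd site \<Rightarrow> 'd site" where
  "vsub x v = (\<lambda>k. x k - v k)"

definition unitv :: "'d \<Rightarrow> 'd site" where
  "unitv i = (\<lambda>k. if k = i then 1 else 0)"

definition adj :: "('d::finite) site \<Rightarrow> 'd site \<Rightarrow> bool" where
  "adj x y \<longleftrightarrow> (\<Sum>i\<in>UNIV. \<bar>x i - y i\<bar>) = 1"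

definition bonds :: "('d::finite) bond set" where
  "bonds = {(x, y). adj x y}"

definition boundary :: "('d::finite) site set \<Rightarrow> 'd site set" where
  "boundary \<Lambda> = {x. x \<notin> \<Lambda> \<and> (\<exists>y\<in>\<Lambda>. adj x y)}"

definition grad :: "(('d::finite) site \<Rightarrow> real) \<Rightarrow> ('d bond \<Rightarrow> real)" where
  "grad \<phi> = restrict (\<lambda>b. \<phi> (snd b) - \<phi> (fst b)) bonds"

definition chi :: "(('d::finite) bond \<Rightarrow> real) set" where
  "chi = {\<eta> \<in> PiE bonds (\<lambda>_. UNIV).
     (\<forall>b\<in>bonds. \<eta> (snd b, fst b) = - \<eta> b) \<and>
     (\<forall>x i j. i \<noteq> j \<longrightarrow>
        \<eta> (x, vadd x (unitv i)) + \<eta> (vadd x (unitv i), vadd (vadd x (unitv i)) (unitv j))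
        + \<eta> (vadd (vadd x (unitv i)) (unitv j), vadd x (unitv j)) + \<eta> (vadd x (unitv j), x) = 0)}"

definition chi_M :: "(('d::finite) bond \<Rightarrow> real) measure" where
  "chi_M = restrict_space (PiM bonds (\<lambda>_. borel)) chi"

definition psi_of :: "(('d::finite) bond \<Rightarrow> real) \<Rightarrow> ('d site \<Rightarrow> real)" where
  "psi_of \<rho> = (SOME \<psi>. grad \<psi> = \<rho> \<and> \<psi> (\<lambda>_. 0) = 0)"

definition ext_cfg :: "'d site set \<Rightarrow> ('d site \<Rightarrow> real) \<Rightarrow> ('d site \<Rightarrow> real) \<Rightarrow> ('d site \<Rightarrow> real)" where
  "ext_cfg \<Lambda> \<phi> \<psi> = (\<lambda>x. if x \<in> \<Lambda> then \<phi> x else \<psi> x)"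

text \<open>Hamiltonian H^psi_Lambda[xi](phi) (sums over ordered nearest-neighbour pairs).\<close>
definition Ham :: "(real \<Rightarrow> real) \<Rightarrow> (('d::finite) site \<Rightarrow> real) \<Rightarrow> 'd site set
    \<Rightarrow> ('d site \<Rightarrow> real) \<Rightarrow> ('d site \<Rightarrow> real) \<Rightarrow> real" where
  "Ham V \<xi> \<Lambda> \<psi> \<phi> =
     (1/2) * (\<Sum>(x, y)\<in>{(x, y). x \<in> \<Lambda> \<and> y \<in> \<Lambda> \<and> adj x y}. V (\<phi> x - \<phi> y))
   + (\<Sum>(x, y)\<in>{(x, y). x \<in> \<Lambda> \<and> y \<in> boundary \<Lambda> \<and> adj x y}. V (\<phi> x - \<psi> y))
   + (1/2) * (\<Sum>x\<in>\<Lambda>. \<xi> x * \<phi> x)"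

text \<open>Finite-volume Gibbs measure nu^psi_Lambda[xi], as a measure on the coordinates in Lambda
  (outside Lambda the configuration equals psi).\<close>
definition partition_fn :: "(real \<Rightarrow> real) \<Rightarrow> (('d::finite) site \<Rightarrow> real) \<Rightarrow> 'd site set
    \<Rightarrow> ('d site \<Rightarrow> real) \<Rightarrow> real" where
  "partition_fn V \<xi> \<Lambda> \<psi> = (\<integral>\<phi>. exp (- Ham V \<xi> \<Lambda> \<psi> \<phi>) \<partial>(PiM \<Lambda> (\<lambda>_. lborel)))"

definition nu_fin :: "(real \<Rightarrow> real) \<Rightarrow> (('d::finite) site \<Rightarrow> real) \<Rightarrow> 'd site set
    \<Rightarrow> ('d site \<Rightarrow> real) \<Rightarrow> ('d site \<Rightarrow> real) measure" where
  "nu_fin V \<xi> \<Lambda> \<psi> = density (PiM \<Lambda> (\<lambda>_. lborel))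
      (\<lambda>\<phi>. ennreal (exp (- Ham V \<xi> \<Lambda> \<psi> \<phi>) / partition_fn V \<xi> \<Lambda> \<psi>))"

definition mu_fin :: "(real \<Rightarrow> real) \<Rightarrow> (('d::finite) site \<Rightarrow> real) \<Rightarrow> 'd site set
    \<Rightarrow> ('d bond \<Rightarrow> real) \<Rightarrow> ('d bond \<Rightarrow> real) measure" where
  "mu_fin V \<xi> \<Lambda> \<rho> = distr (nu_fin V \<xi> \<Lambda> (psi_of \<rho>)) chi_M
      (\<lambda>\<phi>. grad (ext_cfg \<Lambda> \<phi> (psi_of \<rho>)))"

definition Cb :: "((('d::finite) bond \<Rightarrow> real) \<Rightarrow> real) set" where
  "Cb = {F. F \<in> borel_measurable chi_M \<and> continuous_on chi F \<and> bounded (F ` chi)}"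

definition gradient_Gibbs :: "(real \<Rightarrow> real) \<Rightarrow> (('d::finite) site \<Rightarrow> real)
    \<Rightarrow> ('d bond \<Rightarrow> real) measure \<Rightarrow> bool" where
  "gradient_Gibbs V \<xi> \<mu> \<longleftrightarrow> prob_space \<mu> \<and> sets \<mu> = sets chi_M \<and>
     (\<forall>\<Lambda>. finite \<Lambda> \<longrightarrow> (\<forall>F\<in>Cb.
        (\<integral>\<rho>. (\<integral>\<eta>. F \<eta> \<partial>mu_fin V \<xi> \<Lambda> \<rho>) \<partial>\<mu>) = (\<integral>\<eta>. F \<eta> \<partial>\<mu>)))"

definition shift_grad :: "('d::finite) site \<Rightarrow> ('d bond \<Rightarrow> real) \<Rightarrow> ('d bond \<Rightarrow> real)" where
  "shift_grad v \<eta> = restrict (\<lambda>b. \<eta> (vsub (fst b) v, vsub (snd b) v)) bonds"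

definition shift_dis :: "'d site \<Rightarrow> ('d site \<Rightarrow> real) \<Rightarrow> ('d site \<Rightarrow> real)" where
  "shift_dis v \<xi> = (\<lambda>y. \<xi> (vsub y v))"

definition disorder :: "real measure \<Rightarrow> (('d::finite) site \<Rightarrow> real) measure" where
  "disorder D = PiM UNIV (\<lambda>_. D)"

definition shift_cov_random_GGM :: "(real \<Rightarrow> real) \<Rightarrow> real measure
    \<Rightarrow> ((('d::finite) site \<Rightarrow> real) \<Rightarrow> ('d bond \<Rightarrow> real) measure) \<Rightarrow> bool" where
  "shift_cov_random_GGM V D \<mu> \<longleftrightarrow>
     \<mu> \<in> measurable (disorder D) (prob_algebra chi_M) \<and>
     (AE \<xi> in disorder D. gradient_Gibbs V \<xi> (\<mu> \<xi>)) \<and>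
     (\<forall>\<xi>\<in>space (disorder D). \<forall>v. \<forall>F\<in>Cb.
        (\<integral>\<eta>. F \<eta> \<partial>\<mu> (shift_dis v \<xi>)) = (\<integral>\<eta>. F (shift_grad v \<eta>) \<partial>\<mu> \<xi>))"

end

theory Submission
  imports Defs
begin



locale Vpot =
  fixes V V' V'' :: "real \<Rightarrow> real" and A B C2 :: real
  assumes V_even: "\<forall>s. V (- s) = V s"
    and V_d1: "\<forall>s. (V has_real_derivative V' s) (at s)"
    and V_d2: "\<forall>s. (V' has_real_derivative V'' s) (at s)"
    and A_pos: "A > 0"
    and V_lower: "\<forall>s. V s \<ge> A * s^2 - B"
    and V_upper: "\<forall>s. V'' s \<le> C2"
    and C2_pos: "C2 > 0"
begin

lemma V'_odd: "V' (- s) = - V' s"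
proof -
  have "((\<lambda>s. V (- s)) has_real_derivative V' (- s) * (-1)) (at s)"
    using DERIV_chain2[OF V_d1[rule_format] DERIV_minus[OF DERIV_ident], of s] by simp
  moreover have "(\<lambda>s. V (- s)) = V" using V_even by auto
  ultimately have "(V has_real_derivative - V' (- s)) (at s)" by simp
  with V_d1 DERIV_unique show ?thesis by fastforce
qed

lemma V'_swap: "V' (a - b) = - V' (b - a)"
  using V'_odd[of "b - a"] by simp

lemma V'_0: "V' 0 = 0"
  using V'_odd[of 0] by simp

lemma V_cont: "isCont V s" using V_d1 DERIV_isCont by blast
lemma V'_cont: "isCont V' s" using V_d2 DERIV_isCont by blast

lemma V_taylor: "V (s + u) \<le> V s + V' s * u + C2 / 2 * u^2"
proof -
  define w where "w u = V s + V' s * u + C2 / 2 * u^2 - V (s + u)" for u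
  define w' where "w' u = V' s + C2 * u - V' (s + u)" for u
  have dw: "(w has_real_derivative w' u) (at u)" for u
    unfolding w_def w'_def
    by (auto intro!: derivative_eq_intros DERIV_chain2[OF V_d1[rule_format]] simp: power2_eq_square algebra_simps)
  have dw': "(w' has_real_derivative (C2 - V'' (s + u))) (at u)" for u
    unfolding w'_def
    by (auto intro!: derivative_eq_intros DERIV_chain2[OF V_d2[rule_format]] simp: algebra_simps)
  have w'0: "w' 0 = 0" by (simp add: w'_def)
  have w0: "w 0 = 0" by (simp add: w_def)
  have w'pos: "w' u \<ge> 0" if "u \<ge> 0" for u
    using DERIV_nonneg_imp_nondecreasing[of 0 u w'] dw' V_upper that w'0
    by (metis diff_ge_0_iff_ge)
  have w'neg: "w' u \<le> 0" if "u \<le> 0" for u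
    using DERIV_nonneg_imp_nondecreasing[of u 0 w'] dw' V_upper that w'0
    by (metis diff_ge_0_iff_ge)
  have "w u \<ge> 0"
  proof (cases "u \<ge> 0")
    case True
    then show ?thesis using DERIV_nonneg_imp_nondecreasing[of 0 u w] dw w'pos w0 by metis
  next
    case False
    then show ?thesis using DERIV_nonpos_imp_nonincreasing[of u 0 w] dw w'neg w0 by (metis linorder_linear)
  qed
  then show ?thesis by (simp add: w_def)
qed

lemma V_ge: "V s \<ge> - B"
proof -
  have "A * s^2 \<ge> 0" using A_pos by simp
  then show ?thesis using V_lower[rule_format, of s] by linarith
qed

lemma V_le: "V s \<le> V 0 + C2 / 2 * s^2"
  using V_taylor[of 0 s] by (simp add: V'_0)

lemma V'_bound: "\<bar>V' s\<bar> \<le> \<bar>V 0\<bar> + \<bar>B\<bar> + C2/2 + C2/2 * s^2"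
proof -
  have 1: "V (s + 1) \<le> V s + V' s + C2/2" using V_taylor[of s 1] by simp
  have 2: "V (s + -1) \<le> V s - V' s + C2/2" using V_taylor[of s "-1"] by simp
  have "V (s+1) \<ge> -B" "V (s + -1) \<ge> -B" by (rule V_ge)+
  moreover have "V s \<le> V 0 + C2 / 2 * s^2" by (rule V_le)
  ultimately show ?thesis using 1 2 by (auto simp: abs_le_iff)
qed


lemma V_meas[measurable]: "V \<in> borel_measurable borel"
  by (intro borel_measurable_continuous_onI continuous_at_imp_continuous_on) (auto intro: V_cont)
lemma V'_meas[measurable]: "V' \<in> borel_measurable borel"
  by (intro borel_measurable_continuous_onI continuous_at_imp_continuous_on) (auto intro: V'_cont)

definition hh :: "'a set \<Rightarrow> ('a \<Rightarrow> real) \<Rightarrow> real \<Rightarrow> real \<Rightarrow> real" where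
  "hh S p c t = (\<Sum>y\<in>S. V (t - p y)) + c * t"
definition gg :: "'a set \<Rightarrow> ('a \<Rightarrow> real) \<Rightarrow> real \<Rightarrow> real" where
  "gg S p t = (\<Sum>y\<in>S. V' (p y - t))"

lemma hh_meas[measurable]: "hh S p c \<in> borel_measurable borel"
  unfolding hh_def by measurable
lemma gg_meas[measurable]: "gg S p \<in> borel_measurable borel"
  unfolding gg_def by measurable

lemma sq_aux1: "(t - a)^2 \<ge> t^2/2 - a^2" for t a :: real
proof -
  have "0 \<le> (t - 2*a)^2 / 2" by simp
  then show ?thesis by (simp add: power2_eq_square algebra_simps)
qed

lemma sq_aux2: "A/4 * t^2 + c * t + c^2 / A \<ge> 0" for t c :: real
proof -
  have "0 \<le> (A * t + 2 * c)^2 / (4 * A)" using A_pos by simp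
  also have "(A * t + 2 * c)^2 / (4 * A) = A/4 * t^2 + c * t + c^2 / A"
    using A_pos by (simp add: power2_eq_square field_simps)
  finally show ?thesis .
qed

lemma hh_lower:
  assumes S: "finite S" "y0 \<in> S"
  shows "hh S p c t \<ge> A/4 * t^2 - (real (card S) * \<bar>B\<bar> + A * (p y0)^2 + c^2 / A)"
proof -
  have "(\<Sum>y\<in>S. V (t - p y)) = V (t - p y0) + (\<Sum>y\<in>S - {y0}. V (t - p y))"
    using S by (simp add: sum.remove)
  moreover have "(\<Sum>y\<in>S - {y0}. V (t - p y)) \<ge> (\<Sum>y\<in>S - {y0}. - \<bar>B\<bar>)"
  proof (intro sum_mono)
    fix y show "- \<bar>B\<bar> \<le> V (t - p y)" using V_ge[of "t - p y"] by linarith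
  qed
  moreover have "(\<Sum>y\<in>S - {y0}. - \<bar>B\<bar>) = - (real (card S) - 1) * \<bar>B\<bar>"
  proof -
    have c1: "card S \<ge> 1" using S card_0_eq[of S] by fastforce
    then show ?thesis using S by (simp add: card_Diff_singleton of_nat_diff algebra_simps)
  qed
  moreover have "V (t - p y0) \<ge> A * (t - p y0)^2 - \<bar>B\<bar>"
    using V_lower[rule_format, of "t - p y0"] by linarith
  moreover have "A * (t - p y0)^2 \<ge> A * (t^2/2 - (p y0)^2)"
    using sq_aux1 A_pos by (intro mult_left_mono) auto
  moreover note sq_aux2[of t c]
  ultimately show ?thesis unfolding hh_def by (simp add: algebra_simps)
qed

lemma gg_bound:
  assumes S: "finite S"
  shows "\<bar>gg S p t\<bar> \<le> (\<Sum>y\<in>S. \<bar>V 0\<bar> + \<bar>B\<bar> + C2/2 + C2 * (p y)^2) + real (card S) * C2 * t^2"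
proof -
  have "\<bar>gg S p t\<bar> \<le> (\<Sum>y\<in>S. \<bar>V' (p y - t)\<bar>)" unfolding gg_def by (rule sum_abs)
  also have "\<dots> \<le> (\<Sum>y\<in>S. \<bar>V 0\<bar> + \<bar>B\<bar> + C2/2 + C2 * (p y)^2 + C2 * t^2)"
  proof (intro sum_mono)
    fix y
    have sq: "(p y - t)^2 \<le> 2 * (p y)^2 + 2 * t^2"
    proof -
      have "0 \<le> (p y + t)^2" by simp
      then show ?thesis by (simp add: power2_eq_square algebra_simps)
    qed
    have "C2/2 * (p y - t)^2 \<le> C2 * (p y)^2 + C2 * t^2"
      using mult_left_mono[OF sq, of C2] C2_pos by (simp add: algebra_simps)
    then show "\<bar>V' (p y - t)\<bar> \<le> \<bar>V 0\<bar> + \<bar>B\<bar> + C2/2 + C2 * (p y)^2 + C2 * t^2"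
      using V'_bound[of "p y - t"] by linarith
  qed
  also have "\<dots> = (\<Sum>y\<in>S. \<bar>V 0\<bar> + \<bar>B\<bar> + C2/2 + C2 * (p y)^2) + real (card S) * C2 * t^2"
    by (simp add: sum.distrib)
  finally show ?thesis .
qed

lemma gauss_int:
  "integrable lborel (\<lambda>t. (1 + t^2) * exp (- (A/4) * t^2))"
proof -
  define \<sigma> where "\<sigma> = sqrt (2 / A)"
  have s2: "\<sigma>^2 = 2 / A" using A_pos by (simp add: \<sigma>_def)
  have spos: "\<sigma> > 0" using A_pos by (simp add: \<sigma>_def)
  define k where "k = 1 / sqrt (2 * pi * \<sigma>^2)"
  have kpos: "k > 0" using A_pos by (simp add: k_def s2)
  have nd: "normal_density 0 \<sigma> t = k * exp (- (A/4) * t^2)" for t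
    using spos A_pos unfolding normal_density_def k_def by (simp add: s2 divide_simps)
  have "integrable lborel (\<lambda>t. normal_density 0 \<sigma> t * (t - 0)^0 + normal_density 0 \<sigma> t * (t - 0)^2)"
    by (intro Bochner_Integration.integrable_add integrable_normal_moment spos)
  then have "integrable lborel (\<lambda>t. (normal_density 0 \<sigma> t * (t - 0)^0 + normal_density 0 \<sigma> t * (t - 0)^2) / k)"
    by (rule integrable_divide_zero)
  moreover have "(normal_density 0 \<sigma> t * (t - 0)^0 + normal_density 0 \<sigma> t * (t - 0)^2) / k = (1 + t^2) * exp (- (A/4) * t^2)" for t
    using kpos by (simp add: nd field_simps)
  ultimately show ?thesis by simp
qed


lemma gauss_lim_top: "((\<lambda>t. exp (- (A/4) * t^2)) \<longlongrightarrow> 0) at_top"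
proof -
  have "filterlim (\<lambda>t::real. t^2) at_top at_top"
    by (intro filterlim_pow_at_top filterlim_ident) auto
  then have "filterlim (\<lambda>t::real. A/4 * t^2) at_top at_top"
    using A_pos by (intro filterlim_tendsto_pos_mult_at_top[OF tendsto_const]) auto
  then have "filterlim (\<lambda>t::real. - (A/4 * t^2)) at_bot at_top"
    by (simp add: filterlim_uminus_at_top)
  from filterlim_compose[OF exp_at_bot this] show ?thesis by simp
qed

lemma gauss_lim_bot: "((\<lambda>t. exp (- (A/4) * t^2)) \<longlongrightarrow> 0) at_bot"
  using gauss_lim_top by (simp add: filterlim_at_bot_mirror)

context
  fixes S :: "'a set" and p :: "'a \<Rightarrow> real" and c :: real and y0 :: 'a
  assumes S: "finite S" "y0 \<in> S"
begin

abbreviation "KK \<equiv> real (card S) * \<bar>B\<bar> + A * (p y0)^2 + c^2 / A"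
abbreviation "MM \<equiv> exp KK * (1 + (\<Sum>y\<in>S. \<bar>V 0\<bar> + \<bar>B\<bar> + C2/2 + C2 * (p y)^2) + real (card S) * C2)"

lemma EE_bound: "exp (- hh S p c t) \<le> exp KK * exp (- (A/4) * t^2)"
proof -
  have "- hh S p c t \<le> KK + - (A/4) * t^2" using hh_lower[OF S, where p=p and c=c and t=t] by simp
  then show ?thesis by (simp add: exp_add[symmetric])
qed

lemma EEg_bound: "exp (- hh S p c t) * (1 + \<bar>gg S p t\<bar>) \<le> MM * ((1 + t^2) * exp (- (A/4) * t^2))"
proof -
  define K1 where "K1 = (\<Sum>y\<in>S. \<bar>V 0\<bar> + \<bar>B\<bar> + C2/2 + C2 * (p y)^2)"
  define K2 where "K2 = real (card S) * C2"
  have K1: "K1 \<ge> 0" unfolding K1_def by (intro sum_nonneg) (use C2_pos in auto)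
  have K2: "K2 \<ge> 0" unfolding K2_def using C2_pos by simp
  have "1 + \<bar>gg S p t\<bar> \<le> 1 + K1 + K2 * t^2" using gg_bound[OF S(1), of p t] by (simp add: K1_def K2_def)
  also have "\<dots> \<le> (1 + K1 + K2) * (1 + t^2)" using K1 K2 by (simp add: algebra_simps)
  finally have g: "1 + \<bar>gg S p t\<bar> \<le> (1 + K1 + K2) * (1 + t^2)" .
  have "exp (- hh S p c t) * (1 + \<bar>gg S p t\<bar>) \<le> (exp KK * exp (- (A/4) * t^2)) * ((1 + K1 + K2) * (1 + t^2))"
    by (intro mult_mono EE_bound g) auto
  also have "\<dots> = MM * ((1 + t^2) * exp (- (A/4) * t^2))"
    by (simp add: K1_def K2_def)
  finally show ?thesis .
qed

lemma int_EE_dom: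
  assumes [measurable]: "\<Phi> \<in> borel_measurable borel" and bd: "\<And>t. \<bar>\<Phi> t\<bar> \<le> 1 + \<bar>gg S p t\<bar>"
  shows "integrable lborel (\<lambda>t. exp (- hh S p c t) * \<Phi> t)"
proof (rule Bochner_Integration.integrable_bound)
  show "integrable lborel (\<lambda>t. MM * ((1 + t^2) * exp (- (A/4) * t^2)))"
    using gauss_int by (rule integrable_mult_right)
  show "(\<lambda>t. exp (- hh S p c t) * \<Phi> t) \<in> borel_measurable lborel" by measurable
  show "AE t in lborel. norm (exp (- hh S p c t) * \<Phi> t) \<le> norm (MM * ((1 + t^2) * exp (- (A/4) * t^2)))"
  proof (intro AE_I2)
    fix t
    have "norm (exp (- hh S p c t) * \<Phi> t) \<le> exp (- hh S p c t) * (1 + \<bar>gg S p t\<bar>)"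
      using bd[of t] by (simp add: abs_mult)
    also have "\<dots> \<le> MM * ((1 + t^2) * exp (- (A/4) * t^2))" by (rule EEg_bound)
    also have "\<dots> \<le> norm (MM * ((1 + t^2) * exp (- (A/4) * t^2)))" by simp
    finally show "norm (exp (- hh S p c t) * \<Phi> t) \<le> norm (MM * ((1 + t^2) * exp (- (A/4) * t^2)))" .
  qed
qed

lemma int_EE: "integrable lborel (\<lambda>t. exp (- hh S p c t))"
  using int_EE_dom[of "\<lambda>_. 1"] by simp

lemma int_EEg: "integrable lborel (\<lambda>t. exp (- hh S p c t) * gg S p t)"
  by (rule int_EE_dom) auto

lemma EE_pos_int: "(\<integral>t. exp (- hh S p c t) \<partial>lborel) > 0"
proof -
  have "(\<integral>t. exp (- hh S p c t) \<partial>lborel) \<noteq> 0"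
  proof
    assume "(\<integral>t. exp (- hh S p c t) \<partial>lborel) = 0"
    then have "AE t in lborel. exp (- hh S p c t) = 0"
      using integral_nonneg_eq_0_iff_AE[OF int_EE] by simp
    then have "AE (t::real) in lborel. False" by simp
    then have "ae_filter (lborel::real measure) = bot" by (simp only: eventually_False)
    then show False by (simp add: ae_filter_eq_bot_iff emeasure_lborel_UNIV)
  qed
  moreover have "(\<integral>t. exp (- hh S p c t) \<partial>lborel) \<ge> 0" by (rule Bochner_Integration.integral_nonneg) simp
  ultimately show ?thesis by linarith
qed

lemma hh_deriv: "(hh S p c has_real_derivative (c - gg S p t)) (at t)"
proof -
  have "((\<lambda>t. (\<Sum>y\<in>S. V (t - p y)) + c * t) has_real_derivative (\<Sum>y\<in>S. V' (t - p y) * 1) + c * 1) (at t)"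
    by (intro derivative_intros DERIV_chain2[OF V_d1[rule_format]]) (auto intro!: derivative_eq_intros)
  moreover have "(\<Sum>y\<in>S. V' (t - p y) * 1) = - gg S p t"
    by (simp add: gg_def V'_swap[of t] sum_negf)
  ultimately show ?thesis unfolding hh_def[abs_def] by simp
qed

lemma gg_cont: "isCont (gg S p) t"
  unfolding gg_def by (intro continuous_intros isCont_o2[OF _ V'_cont])

lemma hh_cont: "isCont (hh S p c) t"
  using hh_deriv DERIV_isCont by blast

lemma EE_ibp: "(\<integral>t. exp (- hh S p c t) * gg S p t \<partial>lborel) = c * (\<integral>t. exp (- hh S p c t) \<partial>lborel)"
proof -
  define F where "F t = exp (- hh S p c t)" for t
  define f where "f t = (gg S p t - c) * exp (- hh S p c t)" for t
  have int_f: "integrable lborel f"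
  proof -
    have "integrable lborel (\<lambda>t. exp (- hh S p c t) * gg S p t - c * exp (- hh S p c t))"
      by (intro Bochner_Integration.integrable_diff int_EEg integrable_mult_right int_EE)
    then show ?thesis unfolding f_def by (simp add: algebra_simps)
  qed
  have lim0: "(F \<longlongrightarrow> 0) at_top" "(F \<longlongrightarrow> 0) at_bot"
  proof -
    have b: "0 \<le> F t \<and> F t \<le> exp KK * exp (- (A/4) * t^2)" for t
      unfolding F_def using EE_bound by auto
    show "(F \<longlongrightarrow> 0) at_top"
      using tendsto_sandwich[of "\<lambda>_. 0" F at_top "\<lambda>t. exp KK * exp (- (A/4) * t^2)" 0] b
        tendsto_mult_right_zero[OF gauss_lim_top, of "exp KK"] by (auto simp: mult.commute)
    show "(F \<longlongrightarrow> 0) at_bot"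
      using tendsto_sandwich[of "\<lambda>_. 0" F at_bot "\<lambda>t. exp KK * exp (- (A/4) * t^2)" 0] b
        tendsto_mult_right_zero[OF gauss_lim_bot, of "exp KK"] by (auto simp: mult.commute)
  qed
  have "(LBINT x=-\<infinity>..\<infinity>. f x) = 0 - 0"
  proof (rule interval_integral_FTC_integrable)
    show "- \<infinity> < (\<infinity>::ereal)" by simp
    fix x
    have "(F has_real_derivative (- (c - gg S p x)) * exp (- hh S p c x)) (at x)"
      unfolding F_def by (rule DERIV_fun_exp[OF DERIV_minus[OF hh_deriv], THEN DERIV_cong]) (simp add: mult.commute)
    then show "(F has_vector_derivative f x) (at x)"
      by (simp add: has_real_derivative_iff_has_vector_derivative[symmetric] f_def)
    show "isCont f x" unfolding f_def
      by (intro continuous_intros gg_cont isCont_o2[OF hh_cont])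
  next
    show "set_integrable lborel (einterval (- \<infinity>) \<infinity>) f"
      using int_f by (simp add: set_integrable_def)
    show "((F \<circ> real_of_ereal) \<longlongrightarrow> 0) (at_right (- \<infinity>))"
      using lim0 by (simp add: ereal_tendsto_simps)
    show "((F \<circ> real_of_ereal) \<longlongrightarrow> 0) (at_left \<infinity>)"
      using lim0 by (simp add: ereal_tendsto_simps)
  qed
  then have "(\<integral>t. f t \<partial>lborel) = 0"
    by (simp add: interval_lebesgue_integral_def set_lebesgue_integral_def)
  then have "(\<integral>t. exp (- hh S p c t) * gg S p t - c * exp (- hh S p c t) \<partial>lborel) = 0"
    unfolding f_def by (simp add: algebra_simps)
  then show ?thesis
    using int_EEg int_EE by (simp add: Bochner_Integration.integral_diff)
qed

end

end



definition orig :: "'d site" where "orig = (\<lambda>_. 0)"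
definition N0 :: "('d::finite) site set" where "N0 = {y. adj orig y}"
definition negs :: "'d site \<Rightarrow> 'd site" where "negs y = (\<lambda>k. - y k)"

lemma adj_sym: "adj x y = adj y x"
  unfolding adj_def by (simp add: abs_minus_commute)

lemma not_adj_self: "\<not> adj x x"
  unfolding adj_def by simp

lemma bonds_iff: "(x, y) \<in> bonds \<longleftrightarrow> adj x y"
  by (simp add: bonds_def)

lemma adj_unit: "adj x (vadd x (unitv i))"
proof -
  have "(\<Sum>k\<in>UNIV. \<bar>x k - vadd x (unitv i) k\<bar>) = (\<Sum>k\<in>UNIV. if k = i then 1 else 0)"
    by (intro sum.cong) (auto simp: vadd_def unitv_def)
  also have "\<dots> = 1" by simp
  finally show ?thesis by (simp add: adj_def)
qed

lemma N0_finite: "finite (N0 :: ('d::finite) site set)"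
proof -
  have "N0 \<subseteq> PiE (UNIV :: 'd set) (\<lambda>_. {-1..1::int})"
  proof
    fix y :: "'d site" assume "y \<in> N0"
    then have s: "(\<Sum>i\<in>UNIV. \<bar>y i\<bar>) = 1" by (simp add: N0_def adj_def orig_def)
    have "\<bar>y i\<bar> \<le> 1" for i
      using member_le_sum[of i UNIV "\<lambda>i. \<bar>y i\<bar>"] s by simp
    then show "y \<in> PiE UNIV (\<lambda>_. {-1..1::int})" by (auto simp: PiE_def extensional_def abs_le_iff)
  qed
  moreover have "finite (PiE (UNIV :: 'd set) (\<lambda>_. {-1..1::int}))" by (intro finite_PiE) auto
  ultimately show ?thesis by (rule finite_subset)
qed

lemma unit_N0: "unitv i \<in> N0"
  using adj_unit[of orig i] by (simp add: N0_def vadd_def orig_def)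

lemma N0_nonempty: "\<exists>y. y \<in> (N0 :: ('d::finite) site set)"
  using unit_N0 by blast

lemma negs_N0: "y \<in> N0 \<Longrightarrow> negs y \<in> N0"
  by (simp add: N0_def adj_def orig_def negs_def)

lemma negs_negs[simp]: "negs (negs y) = y"
  by (simp add: negs_def)

lemma orig_notin_N0: "orig \<notin> N0"
  by (simp add: N0_def not_adj_self)

lemma boundary_orig: "boundary {orig} = N0"
  using orig_notin_N0 by (auto simp: boundary_def N0_def adj_sym)

lemma grad_bond: "(x, y) \<in> bonds \<Longrightarrow> grad \<phi> (x, y) = \<phi> y - \<phi> x"
  by (simp add: grad_def)

lemma grad_in_chi: "grad \<phi> \<in> chi"
proof -
  have "grad \<phi> \<in> PiE bonds (\<lambda>_. UNIV)" by (simp add: grad_def)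
  moreover have "\<forall>b\<in>bonds. grad \<phi> (snd b, fst b) = - grad \<phi> b"
    by (auto simp: grad_def bonds_def adj_sym)
  moreover have "grad \<phi> (x, vadd x (unitv i)) + grad \<phi> (vadd x (unitv i), vadd (vadd x (unitv i)) (unitv j))
        + grad \<phi> (vadd (vadd x (unitv i)) (unitv j), vadd x (unitv j)) + grad \<phi> (vadd x (unitv j), x) = 0" for x i j
  proof -
    have comm: "vadd (vadd x (unitv i)) (unitv j) = vadd (vadd x (unitv j)) (unitv i)"
      by (auto simp: vadd_def)
    have b1: "(x, vadd x (unitv i)) \<in> bonds" by (simp add: bonds_iff adj_unit)
    have b2: "(vadd x (unitv i), vadd (vadd x (unitv i)) (unitv j)) \<in> bonds" by (simp add: bonds_iff adj_unit)
    have b3: "(vadd (vadd x (unitv i)) (unitv j), vadd x (unitv j)) \<in> bonds"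
      by (simp add: bonds_iff comm adj_sym[of _ "vadd x (unitv j)"] adj_unit)
    have b4: "(vadd x (unitv j), x) \<in> bonds" by (simp add: bonds_iff adj_sym[of _ x] adj_unit)
    show ?thesis by (simp add: grad_bond b1 b2 b3 b4)
  qed
  ultimately show ?thesis unfolding chi_def by blast
qed

lemma grad_meas:
  assumes "\<And>x. (\<lambda>m. \<Phi> m x) \<in> borel_measurable M"
  shows "(\<lambda>m. grad (\<Phi> m)) \<in> measurable M chi_M"
  unfolding chi_M_def
proof (rule measurable_restrict_space2)
  show "(\<lambda>m. grad (\<Phi> m)) \<in> space M \<rightarrow> chi" using grad_in_chi by blast
  show "(\<lambda>m. grad (\<Phi> m)) \<in> measurable M (Pi\<^sub>M bonds (\<lambda>_. borel))"
    unfolding grad_def using assms by measurable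
qed

lemma space_chi_M: "space (chi_M :: (('d::finite) bond \<Rightarrow> real) measure) = chi"
proof -
  have "(chi :: ('d bond \<Rightarrow> real) set) \<subseteq> space (PiM bonds (\<lambda>_. borel :: real measure))"
    by (auto simp: chi_def space_PiM)
  then show ?thesis by (simp add: chi_M_def space_restrict_space Int_absorb2)
qed

lemma coord_meas: "b \<in> bonds \<Longrightarrow> (\<lambda>\<eta>. \<eta> b) \<in> borel_measurable chi_M"
  unfolding chi_M_def by (intro measurable_restrict_space1 measurable_component_singleton)

lemma chi_antisym: "\<eta> \<in> chi \<Longrightarrow> (x, y) \<in> bonds \<Longrightarrow> \<eta> (y, x) = - \<eta> (x, y)"
  unfolding chi_def by force




lemma psf: "product_sigma_finite (\<lambda>_::'i. lborel :: real measure)"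
  unfolding product_sigma_finite_def by (simp add: sigma_finite_lborel)

abbreviation "PM \<equiv> PiM {orig} (\<lambda>_. lborel :: real measure)"

lemma PM_meas: "(\<lambda>\<phi>. \<phi> orig) \<in> measurable PM lborel"
  by (rule measurable_component_singleton) simp

lemma PM_distr: "distr PM lborel (\<lambda>\<phi>. \<phi> (orig::'d site)) = lborel"
  by (rule product_sigma_finite.distr_singleton[OF psf])

lemma PM_integral:
  fixes f :: "real \<Rightarrow> real"
  assumes "f \<in> borel_measurable borel"
  shows "(\<integral>\<phi>. f (\<phi> (orig::'d site)) \<partial>PM) = (\<integral>t. f t \<partial>lborel)"
proof -
  have "(\<integral>t. f t \<partial>distr PM lborel (\<lambda>\<phi>. \<phi> (orig::'d site))) = (\<integral>\<phi>. f (\<phi> (orig::'d site)) \<partial>PM)"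
    apply (rule integral_distr[where g="\<lambda>\<phi>. \<phi> (orig::'d site)"])
    using PM_meas apply simp
    using assms apply simp
    done
  then show ?thesis by (simp add: PM_distr)
qed

lemma PM_integrable:
  fixes f :: "real \<Rightarrow> real"
  assumes "f \<in> borel_measurable borel"
  shows "integrable PM (\<lambda>\<phi>. f (\<phi> (orig::'d site))) \<longleftrightarrow> integrable lborel f"
proof -
  have "integrable (distr PM lborel (\<lambda>\<phi>. \<phi> (orig::'d site))) f \<longleftrightarrow> integrable PM (\<lambda>\<phi>. f (\<phi> (orig::'d site)))"
    apply (rule integrable_distr_eq[where g="\<lambda>\<phi>. \<phi> (orig::'d site)"])
    using PM_meas apply simp
    using assms apply simp
    done
  then show ?thesis by (simp add: PM_distr)
qed

definition Eg :: "(('d::finite) site \<Rightarrow> real) \<Rightarrow> real \<Rightarrow> ('d bond \<Rightarrow> real)" where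
  "Eg \<psi> t = grad (\<lambda>x. if x = orig then t else \<psi> x)"

lemma Eg_meas: "Eg \<psi> \<in> measurable borel chi_M"
  unfolding Eg_def
proof (rule grad_meas)
  fix x show "(\<lambda>t. if x = orig then t else \<psi> x) \<in> borel_measurable borel"
    by (cases "x = orig") auto
qed

lemma ext_cfg_orig: "ext_cfg {orig} \<phi> \<psi> = (\<lambda>x. if x = orig then \<phi> orig else \<psi> x)"
  by (auto simp: ext_cfg_def)

lemma T_meas: "(\<lambda>\<phi>. grad (ext_cfg {orig} \<phi> \<psi>)) \<in> measurable PM chi_M"
  unfolding ext_cfg_orig
proof (rule grad_meas)
  fix x :: "'a site" show "(\<lambda>\<phi>. if x = orig then \<phi> orig else \<psi> x) \<in> borel_measurable PM"
    by (cases "x = orig") (auto intro: PM_meas[THEN measurable_compose] simp: measurable_component_singleton)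
qed

context Vpot
begin

lemma Ham_orig: "Ham V \<xi> {orig} \<psi> \<phi> = hh N0 \<psi> (\<xi> orig / 2) (\<phi> orig)"
proof -
  have e: "{(x, y). x \<in> {orig} \<and> y \<in> {orig} \<and> adj x y} = {}" by (auto simp: not_adj_self)
  have b: "{(x, y). x \<in> {orig} \<and> y \<in> boundary {orig} \<and> adj x y} = (\<lambda>y. (orig, y)) ` N0"
    by (auto simp: boundary_orig N0_def)
  have "(\<Sum>(x, y)\<in>(\<lambda>y. (orig, y)) ` N0. V (\<phi> x - \<psi> y)) = (\<Sum>y\<in>N0. V (\<phi> orig - \<psi> y))"
    by (subst sum.reindex) (auto simp: inj_on_def)
  then show ?thesis unfolding Ham_def hh_def e b by simp
qed

abbreviation "ZZ \<xi> \<psi> \<equiv> (\<integral>t. exp (- hh N0 \<psi> (\<xi> orig / 2) t) \<partial>lborel)"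

lemma partition_orig: "partition_fn V \<xi> {orig} \<psi> = ZZ \<xi> \<psi>"
  unfolding partition_fn_def Ham_orig by (rule PM_integral) measurable

lemma nu_orig: "nu_fin V \<xi> {orig} \<psi> = density PM (\<lambda>\<phi>. ennreal (exp (- hh N0 \<psi> (\<xi> orig / 2) (\<phi> orig)) / ZZ \<xi> \<psi>))"
  unfolding nu_fin_def Ham_orig partition_orig ..

lemma mu_orig:
  fixes \<rho> :: "('d::finite) bond \<Rightarrow> real" and \<xi> :: "'d site \<Rightarrow> real"
  assumes F: "F \<in> borel_measurable chi_M"
  shows "integral\<^sup>L (mu_fin V \<xi> {orig} \<rho>) F
      = (\<integral>t. (exp (- hh N0 (psi_of \<rho>) (\<xi> orig / 2) t) / ZZ \<xi> (psi_of \<rho>)) * F (Eg (psi_of \<rho>) t) \<partial>lborel)"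
    and "integrable (mu_fin V \<xi> {orig} \<rho>) F \<longleftrightarrow>
      integrable lborel (\<lambda>t. (exp (- hh N0 (psi_of \<rho>) (\<xi> orig / 2) t) / ZZ \<xi> (psi_of \<rho>)) * F (Eg (psi_of \<rho>) t))"
proof -
  define \<psi> where "\<psi> = psi_of \<rho>"
  define w where "w t = exp (- hh N0 \<psi> (\<xi> orig / 2) t) / ZZ \<xi> \<psi>" for t
  have [measurable]: "w \<in> borel_measurable borel" unfolding w_def by measurable
  have wnn: "w t \<ge> 0" for t
    unfolding w_def by (intro divide_nonneg_nonneg integral_nonneg) auto
  have nu: "nu_fin V \<xi> {orig} \<psi> = density (PM::('d site \<Rightarrow> real) measure) (\<lambda>\<phi>. ennreal (w (\<phi> orig)))"
    unfolding nu_orig w_def ..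
  have T: "(\<lambda>\<phi>. grad (ext_cfg {orig} \<phi> \<psi>)) \<in> measurable (nu_fin V \<xi> {orig} \<psi>) chi_M"
    unfolding nu by (simp add: T_meas cong: measurable_cong_sets)
  have TE: "grad (ext_cfg {orig} \<phi> \<psi>) = Eg \<psi> (\<phi> orig)" for \<phi>
    unfolding ext_cfg_orig Eg_def ..
  have FE[measurable]: "(\<lambda>t. F (Eg \<psi> t)) \<in> borel_measurable borel"
    using measurable_compose[OF Eg_meas F] by simp
  have wF: "(\<lambda>t. w t * F (Eg \<psi> t)) \<in> borel_measurable borel" by measurable
  have wPM: "(\<lambda>\<phi>. w (\<phi> (orig::'d site))) \<in> borel_measurable PM"
    using measurable_compose[OF PM_meas, of w borel] by simp
  have mu: "mu_fin V \<xi> {orig} \<rho> = distr (nu_fin V \<xi> {orig} \<psi>) chi_M (\<lambda>\<phi>. grad (ext_cfg {orig} \<phi> \<psi>))"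
    unfolding mu_fin_def \<psi>_def ..
  have FT: "(\<lambda>\<phi>. F (grad (ext_cfg {orig::'d site} \<phi> \<psi>))) \<in> borel_measurable PM"
    using measurable_compose[OF T_meas F] by simp
  have "integral\<^sup>L (mu_fin V \<xi> {orig} \<rho>) F = (\<integral>\<phi>. F (grad (ext_cfg {orig} \<phi> \<psi>)) \<partial>nu_fin V \<xi> {orig} \<psi>)"
    unfolding mu by (rule integral_distr[OF T F])
  also have "\<dots> = (\<integral>\<phi>. w (\<phi> orig) * F (grad (ext_cfg {orig::'d site} \<phi> \<psi>)) \<partial>PM)"
    unfolding nu by (subst integral_density[OF FT wPM]) (auto simp: wnn)
  also have "\<dots> = (\<integral>\<phi>. w (\<phi> orig) * F (Eg \<psi> (\<phi> (orig::'d site))) \<partial>PM)" unfolding TE ..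
  also have "\<dots> = (\<integral>t. w t * F (Eg \<psi> t) \<partial>lborel)"
    by (rule PM_integral[OF wF])
  finally show "integral\<^sup>L (mu_fin V \<xi> {orig} \<rho>) F
      = (\<integral>t. (exp (- hh N0 (psi_of \<rho>) (\<xi> orig / 2) t) / ZZ \<xi> (psi_of \<rho>)) * F (Eg (psi_of \<rho>) t) \<partial>lborel)"
    unfolding w_def \<psi>_def .
  have "integrable (mu_fin V \<xi> {orig} \<rho>) F \<longleftrightarrow> integrable (nu_fin V \<xi> {orig} \<psi>) (\<lambda>\<phi>. F (grad (ext_cfg {orig} \<phi> \<psi>)))"
    unfolding mu by (rule integrable_distr_eq[OF T F])
  also have "\<dots> \<longleftrightarrow> integrable PM (\<lambda>\<phi>. w (\<phi> orig) * F (grad (ext_cfg {orig::'d site} \<phi> \<psi>)))"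
    unfolding nu by (subst integrable_density[OF FT wPM]) (auto simp: wnn)
  also have "\<dots> \<longleftrightarrow> integrable PM (\<lambda>\<phi>. w (\<phi> orig) * F (Eg \<psi> (\<phi> (orig::'d site))))" unfolding TE ..
  also have "\<dots> \<longleftrightarrow> integrable lborel (\<lambda>t. w t * F (Eg \<psi> t))"
    by (rule PM_integrable[OF wF])
  finally show "integrable (mu_fin V \<xi> {orig} \<rho>) F \<longleftrightarrow>
      integrable lborel (\<lambda>t. (exp (- hh N0 (psi_of \<rho>) (\<xi> orig / 2) t) / ZZ \<xi> (psi_of \<rho>)) * F (Eg (psi_of \<rho>) t))"
    unfolding w_def \<psi>_def .
qed

end



context Vpot
begin

definition GG :: "(('d::finite) bond \<Rightarrow> real) \<Rightarrow> real" where
  "GG \<eta> = (\<Sum>y\<in>N0. V' (\<eta> (orig, y)))"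

lemma V'_cont_on: "continuous_on UNIV V'"
  by (intro continuous_at_imp_continuous_on) (auto intro: V'_cont)

lemma orig_bond: "y \<in> N0 \<Longrightarrow> (orig, y) \<in> bonds"
  by (simp add: N0_def bonds_iff)

lemma GG_meas[measurable]: "GG \<in> borel_measurable chi_M"
  unfolding GG_def
  by (intro borel_measurable_sum measurable_compose[OF coord_meas V'_meas] orig_bond)

lemma GG_cont: "continuous_on UNIV GG"
  unfolding GG_def
  by (intro continuous_on_sum continuous_on_compose2[OF V'_cont_on]) auto

lemma V'coord_cont: "continuous_on UNIV (\<lambda>\<eta>::('d::finite) bond \<Rightarrow> real. V' (\<eta> b))"
  by (intro continuous_on_compose2[OF V'_cont_on]) auto

lemma Cb_comp:
  fixes H :: "(('d::finite) bond \<Rightarrow> real) \<Rightarrow> real"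
  assumes H: "H \<in> borel_measurable chi_M" "continuous_on UNIV H"
    and \<Phi>: "continuous_on UNIV \<Phi>" and bd: "\<And>x. \<bar>\<Phi> x\<bar> \<le> K"
  shows "(\<lambda>\<eta>. \<Phi> (H \<eta>)) \<in> Cb"
  unfolding Cb_def
proof (intro CollectI conjI)
  show "(\<lambda>\<eta>. \<Phi> (H \<eta>)) \<in> borel_measurable chi_M"
    using measurable_compose[OF H(1) borel_measurable_continuous_onI[OF \<Phi>]] .
  show "continuous_on chi (\<lambda>\<eta>. \<Phi> (H \<eta>))"
    using continuous_on_compose2[OF \<Phi> H(2)] continuous_on_subset by blast
  show "bounded ((\<lambda>\<eta>. \<Phi> (H \<eta>)) ` chi)"
    using bd by (intro boundedI[of _ K]) auto
qed

lemma GG_Eg: "GG (Eg \<psi> t) = gg N0 \<psi> t" for \<psi> :: "('d::finite) site \<Rightarrow> real"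
  unfolding GG_def gg_def Eg_def
proof (intro sum.cong refl)
  fix y :: "'d site" assume y: "y \<in> N0"
  then have "y \<noteq> orig" using orig_notin_N0 by auto
  then show "V' (grad (\<lambda>x. if x = orig then t else \<psi> x) (orig, y)) = V' (\<psi> y - t)"
    by (simp add: grad_bond orig_bond[OF y])
qed

lemma y0_N0: obtains y0 :: "('d::finite) site" where "y0 \<in> N0"
  using N0_nonempty by blast

lemma ZZ_pos: "ZZ \<xi> \<psi> > 0" for \<xi> \<psi> :: "('d::finite) site \<Rightarrow> real"
proof -
  obtain y0 :: "'d site" where "y0 \<in> N0" by (rule y0_N0)
  then show ?thesis using EE_pos_int[OF N0_finite] by blast
qed

lemma site_integrable:
  fixes \<rho> :: "('d::finite) bond \<Rightarrow> real" and \<xi> :: "'d site \<Rightarrow> real"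
  assumes \<Phi>[measurable]: "\<Phi> \<in> borel_measurable borel" and bd: "\<And>x. \<bar>\<Phi> x\<bar> \<le> 1 + \<bar>x\<bar>"
  shows "integrable (mu_fin V \<xi> {orig} \<rho>) (\<lambda>\<eta>. \<Phi> (GG \<eta>))"
proof -
  obtain y0 :: "'d site" where y0: "y0 \<in> N0" by (rule y0_N0)
  have "integrable lborel (\<lambda>t. exp (- hh N0 (psi_of \<rho>) (\<xi> orig / 2) t) * \<Phi> (gg N0 (psi_of \<rho>) t))"
    by (rule int_EE_dom[OF N0_finite y0]) (auto intro: bd)
  then have "integrable lborel (\<lambda>t. exp (- hh N0 (psi_of \<rho>) (\<xi> orig / 2) t) * \<Phi> (gg N0 (psi_of \<rho>) t) / ZZ \<xi> (psi_of \<rho>))"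
    by (rule integrable_divide_zero)
  then show ?thesis
    by (subst mu_orig(2)) (auto simp: GG_Eg)
qed

lemma site_integral:
  fixes \<rho> :: "('d::finite) bond \<Rightarrow> real" and \<xi> :: "'d site \<Rightarrow> real"
  shows "integral\<^sup>L (mu_fin V \<xi> {orig} \<rho>) GG = \<xi> orig / 2"
proof -
  obtain y0 :: "'d site" where y0: "y0 \<in> N0" by (rule y0_N0)
  have Z: "ZZ \<xi> (psi_of \<rho>) > 0" by (rule ZZ_pos)
  have "integral\<^sup>L (mu_fin V \<xi> {orig} \<rho>) GG
      = (\<integral>t. exp (- hh N0 (psi_of \<rho>) (\<xi> orig / 2) t) * gg N0 (psi_of \<rho>) t / ZZ \<xi> (psi_of \<rho>) \<partial>lborel)"
    by (subst mu_orig(1)) (auto simp: GG_Eg)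
  also have "\<dots> = (\<xi> orig / 2) * ZZ \<xi> (psi_of \<rho>) / ZZ \<xi> (psi_of \<rho>)"
    by (simp add: EE_ibp[OF N0_finite y0])
  also have "\<dots> = \<xi> orig / 2" using Z by simp
  finally show ?thesis .
qed

lemma site_prob:
  fixes \<rho> :: "('d::finite) bond \<Rightarrow> real" and \<xi> :: "'d site \<Rightarrow> real"
  shows "prob_space (mu_fin V \<xi> {orig} \<rho>)"
proof
  let ?M = "mu_fin V \<xi> {orig} \<rho>"
  have Z: "ZZ \<xi> (psi_of \<rho>) > 0" by (rule ZZ_pos)
  have "integral\<^sup>L ?M (\<lambda>_. 1::real)
      = (\<integral>t. exp (- hh N0 (psi_of \<rho>) (\<xi> orig / 2) t) / ZZ \<xi> (psi_of \<rho>) \<partial>lborel)"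
    by (subst mu_orig(1)) auto
  also have "\<dots> = 1" using Z by simp
  finally have m: "measure ?M (space ?M) = 1" by simp
  show "emeasure ?M (space ?M) = 1"
  proof (cases "emeasure ?M (space ?M) = top")
    case True
    then have "measure ?M (space ?M) = 0" by (simp add: measure_def)
    then show ?thesis using m by simp
  next
    case False
    then show ?thesis using m emeasure_eq_ennreal_measure by fastforce
  qed
qed

lemma sets_mu_fin: "sets (mu_fin V \<xi> \<Lambda> \<rho>) = sets chi_M"
  by (simp add: mu_fin_def)

end



lemma min_lim: "x \<ge> 0 \<Longrightarrow> (\<lambda>n. min x (real n)) \<longlonglongrightarrow> (x::real)"
proof -
  obtain N :: nat where "x \<le> real N" using real_arch_simple by blast
  then have "eventually (\<lambda>n. min x (real n) = x) sequentially"
    unfolding eventually_sequentially by (intro exI[of _ N]) auto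
  then show ?thesis by (rule tendsto_eventually)
qed

context Vpot
begin

lemma dlr_pos:
  fixes \<xi> :: "('d::finite) site \<Rightarrow> real" and \<mu> :: "('d bond \<Rightarrow> real) measure" and \<Psi> :: "real \<Rightarrow> real"
  assumes G: "gradient_Gibbs V \<xi> \<mu>"
    and \<Psi>c: "continuous_on UNIV \<Psi>" and \<Psi>nn: "\<And>x. 0 \<le> \<Psi> x" and \<Psi>le: "\<And>x. \<Psi> x \<le> \<bar>x\<bar>"
    and int: "integrable \<mu> (\<lambda>\<eta>. \<Psi> (GG \<eta>))"
  shows "integrable \<mu> (\<lambda>\<rho>. \<integral>\<eta>. \<Psi> (GG \<eta>) \<partial>mu_fin V \<xi> {orig} \<rho>)"
    and "(\<integral>\<rho>. (\<integral>\<eta>. \<Psi> (GG \<eta>) \<partial>mu_fin V \<xi> {orig} \<rho>) \<partial>\<mu>) = (\<integral>\<eta>. \<Psi> (GG \<eta>) \<partial>\<mu>)"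
proof -
  have ps: "prob_space \<mu>" and sets\<mu>: "sets \<mu> = sets chi_M"
    and DLR: "\<And>F. F \<in> Cb \<Longrightarrow> (\<integral>\<rho>. (\<integral>\<eta>. F \<eta> \<partial>mu_fin V \<xi> {orig} \<rho>) \<partial>\<mu>) = (\<integral>\<eta>. F \<eta> \<partial>\<mu>)"
    using G unfolding gradient_Gibbs_def by auto
  interpret \<mu>: prob_space \<mu> by (rule ps)
  let ?k = "\<lambda>\<rho>. mu_fin V \<xi> {orig} \<rho>"
  have \<Psi>m[measurable]: "\<Psi> \<in> borel_measurable borel" using \<Psi>c by (rule borel_measurable_continuous_onI)
  define P where "P \<eta> = \<Psi> (GG \<eta>)" for \<eta> :: "'d bond \<Rightarrow> real"
  have Pc: "P \<in> borel_measurable chi_M" unfolding P_def by measurable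
  have P\<mu>: "P \<in> borel_measurable \<mu>" using Pc sets\<mu> by (simp cong: measurable_cong_sets)
  have Pk: "P \<in> borel_measurable (?k \<rho>)" for \<rho> using Pc by (simp add: sets_mu_fin cong: measurable_cong_sets)
  have bd1: "\<bar>\<Psi> x\<bar> \<le> 1 + \<bar>x\<bar>" for x using \<Psi>le[of x] \<Psi>nn[of x] by simp
  have bd2: "\<bar>min (\<Psi> x) (real n)\<bar> \<le> 1 + \<bar>x\<bar>" for x n using \<Psi>le[of x] \<Psi>nn[of x] by simp
  have intk: "integrable (?k \<rho>) P" for \<rho>
    unfolding P_def by (rule site_integrable) (use bd1 in auto)
  define Q where "Q n \<eta> = min (P \<eta>) (real n)" for n :: nat and \<eta> :: "'d bond \<Rightarrow> real"
  have Qnn: "0 \<le> Q n \<eta>" for n \<eta> unfolding Q_def P_def using \<Psi>nn by simp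
  have Qc: "Q n \<in> borel_measurable chi_M" for n unfolding Q_def using Pc by measurable
  have Q\<mu>: "Q n \<in> borel_measurable \<mu>" for n using Qc sets\<mu> by (simp cong: measurable_cong_sets)
  have Qk: "Q n \<in> borel_measurable (?k \<rho>)" for n \<rho> using Qc by (simp add: sets_mu_fin cong: measurable_cong_sets)
  have Qk_int: "integrable (?k \<rho>) (Q n)" for n \<rho>
  proof -
    have "integrable (?k \<rho>) (\<lambda>\<eta>. (\<lambda>x. min (\<Psi> x) (real n)) (GG \<eta>))"
      by (rule site_integrable) (use bd2 in auto)
    moreover have "Q n = (\<lambda>\<eta>. min (\<Psi> (GG \<eta>)) (real n))" by (simp add: fun_eq_iff Q_def P_def)
    ultimately show ?thesis by simp
  qed
  have Q\<mu>_int: "integrable \<mu> (Q n)" for n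
  proof (rule \<mu>.integrable_const_bound[where B="real n"])
    show "AE \<eta> in \<mu>. norm (Q n \<eta>) \<le> real n"
      by (intro AE_I2) (metis Q_def Qnn abs_of_nonneg min.cobounded2 real_norm_def)
  qed (rule Q\<mu>)
  have Fcb: "(\<lambda>\<eta>. (\<lambda>x. min (\<Psi> x) (real n) + 1) (GG \<eta>)) \<in> Cb" for n
  proof -
    have c: "continuous_on UNIV (\<lambda>x. min (\<Psi> x) (real n) + 1)" by (intro continuous_intros \<Psi>c)
    have b: "\<bar>min (\<Psi> x) (real n) + 1\<bar> \<le> real n + 1" for x using \<Psi>nn[of x] by auto
    show ?thesis using Cb_comp[OF GG_meas GG_cont c b] .
  qed
  have Fk: "(\<integral>\<eta>. Q n \<eta> + 1 \<partial>?k \<rho>) = (\<integral>\<eta>. Q n \<eta> \<partial>?k \<rho>) + 1" for n \<rho>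
  proof -
    interpret k: prob_space "?k \<rho>" by (rule site_prob)
    show ?thesis using Qk_int by (simp add: Bochner_Integration.integral_add k.prob_space)
  qed
  define q where "q n \<rho> = (\<integral>\<eta>. Q n \<eta> \<partial>?k \<rho>)" for n and \<rho> :: "'d bond \<Rightarrow> real"
  have dlrQ: "(\<integral>\<rho>. q n \<rho> + 1 \<partial>\<mu>) = (\<integral>\<eta>. Q n \<eta> \<partial>\<mu>) + 1" for n
  proof -
    have "(\<integral>\<rho>. q n \<rho> + 1 \<partial>\<mu>) = (\<integral>\<rho>. (\<integral>\<eta>. (\<lambda>x. min (\<Psi> x) (real n) + 1) (GG \<eta>) \<partial>?k \<rho>) \<partial>\<mu>)"
      unfolding q_def Fk[symmetric] by (simp add: Q_def P_def)
    also have "\<dots> = (\<integral>\<eta>. (\<lambda>x. min (\<Psi> x) (real n) + 1) (GG \<eta>) \<partial>\<mu>)" by (rule DLR[OF Fcb])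
    also have "\<dots> = (\<integral>\<eta>. Q n \<eta> + 1 \<partial>\<mu>)" by (simp add: Q_def P_def)
    also have "\<dots> = (\<integral>\<eta>. Q n \<eta> \<partial>\<mu>) + 1" using Q\<mu>_int by (simp add: Bochner_Integration.integral_add \<mu>.prob_space)
    finally show ?thesis .
  qed
  have q_int1: "integrable \<mu> (\<lambda>\<rho>. q n \<rho> + 1)" for n
  proof (rule ccontr)
    assume "\<not> integrable \<mu> (\<lambda>\<rho>. q n \<rho> + 1)"
    then have "(\<integral>\<rho>. q n \<rho> + 1 \<partial>\<mu>) = 0" by (rule not_integrable_integral_eq)
    moreover have "(\<integral>\<eta>. Q n \<eta> \<partial>\<mu>) \<ge> 0" by (intro Bochner_Integration.integral_nonneg Qnn)
    ultimately show False using dlrQ[of n] by linarith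
  qed
  have q_int: "integrable \<mu> (q n)" for n
  proof -
    have "integrable \<mu> (\<lambda>\<rho>. (q n \<rho> + 1) - 1)" by (intro Bochner_Integration.integrable_diff q_int1) simp
    then show ?thesis by simp
  qed
  have q_eq: "(\<integral>\<rho>. q n \<rho> \<partial>\<mu>) = (\<integral>\<eta>. Q n \<eta> \<partial>\<mu>)" for n
    using dlrQ[of n] q_int[of n] by (simp add: Bochner_Integration.integral_add \<mu>.prob_space)
  have Qlim: "(\<lambda>n. Q n \<eta>) \<longlonglongrightarrow> P \<eta>" for \<eta>
    unfolding Q_def by (rule min_lim) (simp add: P_def \<Psi>nn)
  have Qbd: "norm (Q n \<eta>) \<le> P \<eta>" for n \<eta>
    using Qnn[of n \<eta>] by (simp add: Q_def)
  have qlim: "(\<lambda>n. q n \<rho>) \<longlonglongrightarrow> (\<integral>\<eta>. P \<eta> \<partial>?k \<rho>)" for \<rho>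
    unfolding q_def
    by (rule integral_dominated_convergence[where w=P, OF Pk Qk intk]) (intro AE_I2 Qlim Qbd)+
  have Q\<mu>lim: "(\<lambda>n. \<integral>\<eta>. Q n \<eta> \<partial>\<mu>) \<longlonglongrightarrow> (\<integral>\<eta>. P \<eta> \<partial>\<mu>)"
    by (rule integral_dominated_convergence[where w=P, OF P\<mu> Q\<mu> int[folded P_def]]) (intro AE_I2 Qlim Qbd)+
  have qmono: "mono (\<lambda>n. q n \<rho>)" for \<rho>
  proof (rule monoI)
    fix m n :: nat assume "m \<le> n"
    then show "q m \<rho> \<le> q n \<rho>" unfolding q_def
      by (intro integral_mono Qk_int) (auto simp: Q_def)
  qed
  have qnn: "0 \<le> q n \<rho>" for n \<rho> unfolding q_def by (intro Bochner_Integration.integral_nonneg Qnn)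
  have um: "(\<lambda>\<rho>. \<integral>\<eta>. P \<eta> \<partial>?k \<rho>) \<in> borel_measurable \<mu>"
    by (rule borel_measurable_LIMSEQ_real[OF qlim]) (rule borel_measurable_integrable[OF q_int])
  have Q\<mu>lim': "(\<lambda>n. \<integral>\<rho>. q n \<rho> \<partial>\<mu>) \<longlonglongrightarrow> (\<integral>\<eta>. P \<eta> \<partial>\<mu>)"
    using Q\<mu>lim by (simp add: q_eq)
  note mc = integral_monotone_convergence_nonneg[of \<mu> q "\<lambda>\<rho>. \<integral>\<eta>. P \<eta> \<partial>?k \<rho>" "\<integral>\<eta>. P \<eta> \<partial>\<mu>",
      OF q_int AE_I2[OF qmono] AE_I2[OF qnn] AE_I2[OF qlim] Q\<mu>lim' um]
  have "integrable \<mu> (\<lambda>\<rho>. \<integral>\<eta>. P \<eta> \<partial>?k \<rho>) \<and> (\<integral>\<rho>. (\<integral>\<eta>. P \<eta> \<partial>?k \<rho>) \<partial>\<mu>) = (\<integral>\<eta>. P \<eta> \<partial>\<mu>)"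
    using mc by blast
  then show "integrable \<mu> (\<lambda>\<rho>. \<integral>\<eta>. \<Psi> (GG \<eta>) \<partial>mu_fin V \<xi> {orig} \<rho>)"
    and "(\<integral>\<rho>. (\<integral>\<eta>. \<Psi> (GG \<eta>) \<partial>mu_fin V \<xi> {orig} \<rho>) \<partial>\<mu>) = (\<integral>\<eta>. \<Psi> (GG \<eta>) \<partial>\<mu>)"
    unfolding P_def by auto
qed

end



definition clampr :: "real \<Rightarrow> real \<Rightarrow> real" where
  "clampr N x = max (- N) (min N x)"

lemma clamp_cont: "continuous_on UNIV (clampr N)"
  unfolding clampr_def by (intro continuous_intros)

lemma clamp_bd: "N \<ge> 0 \<Longrightarrow> \<bar>clampr N x\<bar> \<le> N"
  by (simp add: clampr_def)

lemma clamp_abs: "N \<ge> 0 \<Longrightarrow> \<bar>clampr N x\<bar> \<le> \<bar>x\<bar>"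
  by (simp add: clampr_def)

lemma clamp_lim: "(\<lambda>n. clampr (real n) x) \<longlonglongrightarrow> x"
proof -
  obtain N :: nat where "\<bar>x\<bar> \<le> real N" using real_arch_simple by blast
  then have "eventually (\<lambda>n. clampr (real n) x = x) sequentially"
    unfolding eventually_sequentially by (intro exI[of _ N]) (auto simp: clampr_def)
  then show ?thesis by (rule tendsto_eventually)
qed

context Vpot
begin

lemma site_mean:
  fixes \<xi> :: "('d::finite) site \<Rightarrow> real" and \<mu> :: "('d bond \<Rightarrow> real) measure"
  assumes G: "gradient_Gibbs V \<xi> \<mu>"
    and intb: "\<And>y. y \<in> N0 \<Longrightarrow> integrable \<mu> (\<lambda>\<eta>. V' (\<eta> (orig, y)))"
  shows "(\<integral>\<eta>. GG \<eta> \<partial>\<mu>) = \<xi> orig / 2"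
proof -
  have ps: "prob_space \<mu>" using G unfolding gradient_Gibbs_def by auto
  interpret \<mu>: prob_space \<mu> by (rule ps)
  let ?k = "\<lambda>\<rho>. mu_fin V \<xi> {orig} \<rho>"
  have intGG: "integrable \<mu> GG"
    unfolding GG_def[abs_def] by (rule Bochner_Integration.integrable_sum) (rule intb)
  define \<Psi>1 where "\<Psi>1 x = max x (0::real)" for x
  define \<Psi>2 where "\<Psi>2 x = max (- x) (0::real)" for x
  have c1: "continuous_on UNIV \<Psi>1" unfolding \<Psi>1_def[abs_def] by (intro continuous_intros)
  have c2: "continuous_on UNIV \<Psi>2" unfolding \<Psi>2_def[abs_def] by (intro continuous_intros)
  have m1[measurable]: "\<Psi>1 \<in> borel_measurable borel" using c1 by (rule borel_measurable_continuous_onI)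
  have m2[measurable]: "\<Psi>2 \<in> borel_measurable borel" using c2 by (rule borel_measurable_continuous_onI)
  have int1: "integrable \<mu> (\<lambda>\<eta>. \<Psi>1 (GG \<eta>))"
    unfolding \<Psi>1_def using intGG by (intro integrable_max) auto
  have int2: "integrable \<mu> (\<lambda>\<eta>. \<Psi>2 (GG \<eta>))"
    unfolding \<Psi>2_def using intGG by (intro integrable_max) auto
  note D1 = dlr_pos[OF G c1 _ _ int1] and D2 = dlr_pos[OF G c2 _ _ int2]
  have nn1: "\<And>x. 0 \<le> \<Psi>1 x" and le1: "\<And>x. \<Psi>1 x \<le> \<bar>x\<bar>" by (auto simp: \<Psi>1_def)
  have nn2: "\<And>x. 0 \<le> \<Psi>2 x" and le2: "\<And>x. \<Psi>2 x \<le> \<bar>x\<bar>" by (auto simp: \<Psi>2_def)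
  have b1: "\<bar>\<Psi>1 x\<bar> \<le> 1 + \<bar>x\<bar>" for x using le1[of x] nn1[of x] by simp
  have b2: "\<bar>\<Psi>2 x\<bar> \<le> 1 + \<bar>x\<bar>" for x using le2[of x] nn2[of x] by simp
  have diffx: "\<Psi>1 x - \<Psi>2 x = x" for x by (auto simp: \<Psi>1_def \<Psi>2_def)
  have kdiff: "(\<integral>\<eta>. \<Psi>1 (GG \<eta>) \<partial>?k \<rho>) - (\<integral>\<eta>. \<Psi>2 (GG \<eta>) \<partial>?k \<rho>) = \<xi> orig / 2" for \<rho>
  proof -
    have i1: "integrable (?k \<rho>) (\<lambda>\<eta>. \<Psi>1 (GG \<eta>))"
      by (rule site_integrable) (use b1 in auto)
    have i2: "integrable (?k \<rho>) (\<lambda>\<eta>. \<Psi>2 (GG \<eta>))"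
      by (rule site_integrable) (use b2 in auto)
    have "(\<integral>\<eta>. \<Psi>1 (GG \<eta>) \<partial>?k \<rho>) - (\<integral>\<eta>. \<Psi>2 (GG \<eta>) \<partial>?k \<rho>) = (\<integral>\<eta>. \<Psi>1 (GG \<eta>) - \<Psi>2 (GG \<eta>) \<partial>?k \<rho>)"
      using i1 i2 by (rule Bochner_Integration.integral_diff[symmetric])
    also have "\<dots> = integral\<^sup>L (?k \<rho>) GG" by (simp add: diffx)
    also have "\<dots> = \<xi> orig / 2" by (rule site_integral)
    finally show ?thesis .
  qed
  have "(\<integral>\<eta>. GG \<eta> \<partial>\<mu>) = (\<integral>\<eta>. \<Psi>1 (GG \<eta>) - \<Psi>2 (GG \<eta>) \<partial>\<mu>)" by (simp add: diffx)
  also have "\<dots> = (\<integral>\<eta>. \<Psi>1 (GG \<eta>) \<partial>\<mu>) - (\<integral>\<eta>. \<Psi>2 (GG \<eta>) \<partial>\<mu>)"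
    using int1 int2 by (rule Bochner_Integration.integral_diff)
  also have "\<dots> = (\<integral>\<rho>. (\<integral>\<eta>. \<Psi>1 (GG \<eta>) \<partial>?k \<rho>) \<partial>\<mu>) - (\<integral>\<rho>. (\<integral>\<eta>. \<Psi>2 (GG \<eta>) \<partial>?k \<rho>) \<partial>\<mu>)"
    using D1(2)[OF nn1 le1] D2(2)[OF nn2 le2] by simp
  also have "\<dots> = (\<integral>\<rho>. (\<integral>\<eta>. \<Psi>1 (GG \<eta>) \<partial>?k \<rho>) - (\<integral>\<eta>. \<Psi>2 (GG \<eta>) \<partial>?k \<rho>) \<partial>\<mu>)"
    using D1(1)[OF nn1 le1] D2(1)[OF nn2 le2] by (rule Bochner_Integration.integral_diff[symmetric])
  also have "\<dots> = (\<integral>\<rho>. \<xi> orig / 2 \<partial>\<mu>)" by (simp only: kdiff)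
  also have "\<dots> = \<xi> orig / 2" by (simp add: \<mu>.prob_space)
  finally show ?thesis .
qed

end



lemma negs_bij: "bij_betw negs (N0 :: ('d::finite) site set) N0"
proof (rule bij_betwI')
  fix x y :: "'d site" show "(negs x = negs y) = (x = y)" by (metis negs_negs)
next
  fix x :: "'d site" assume "x \<in> N0" then show "negs x \<in> N0" by (rule negs_N0)
next
  fix y :: "'d site" assume "y \<in> N0" then show "\<exists>x\<in>N0. y = negs x"
    by (intro bexI[of _ "negs y"] negs_N0) auto
qed

context Vpot
begin

lemma shift_step:
  fixes \<mu> :: "(('d::finite) site \<Rightarrow> real) \<Rightarrow> ('d bond \<Rightarrow> real) measure" and \<xi> :: "'d site \<Rightarrow> real" and y :: "'d site"
  assumes cov: "\<forall>F\<in>Cb. (\<integral>\<eta>. F \<eta> \<partial>\<mu> (shift_dis y \<xi>)) = (\<integral>\<eta>. F (shift_grad y \<eta>) \<partial>\<mu> \<xi>)"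
    and sets1: "sets (\<mu> \<xi>) = sets chi_M" and sets2: "sets (\<mu> (shift_dis y \<xi>)) = sets chi_M"
    and y: "y \<in> N0"
    and i1: "integrable (\<mu> (shift_dis y \<xi>)) (\<lambda>\<eta>. V' (\<eta> (orig, y)))"
    and i2: "integrable (\<mu> \<xi>) (\<lambda>\<eta>. V' (\<eta> (orig, negs y)))"
  shows "(\<integral>\<eta>. V' (\<eta> (orig, y)) \<partial>\<mu> (shift_dis y \<xi>)) = - (\<integral>\<eta>. V' (\<eta> (orig, negs y)) \<partial>\<mu> \<xi>)"
proof -
  let ?M1 = "\<mu> (shift_dis y \<xi>)" and ?M = "\<mu> \<xi>"
  have b1: "(orig, y) \<in> bonds" by (rule orig_bond[OF y])
  have b2: "(orig, negs y) \<in> bonds" by (rule orig_bond[OF negs_N0[OF y]])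
  have b3: "(negs y, orig) \<in> bonds" using b2 by (simp add: bonds_iff adj_sym)
  have sh: "V' (shift_grad y \<eta> (orig, y)) = V' (\<eta> (negs y, orig))" for \<eta>
    using b1 by (simp add: shift_grad_def vsub_def orig_def negs_def)
  have spM: "space ?M = chi" using sets_eq_imp_space_eq[OF sets1] by (simp add: space_chi_M)
  have m1: "(\<lambda>\<eta>. V' (\<eta> (orig, y))) \<in> borel_measurable chi_M"
    by (rule measurable_compose[OF coord_meas[OF b1] V'_meas])
  have m3: "(\<lambda>\<eta>. V' (\<eta> (negs y, orig))) \<in> borel_measurable chi_M"
    by (rule measurable_compose[OF coord_meas[OF b3] V'_meas])
  have m1': "(\<lambda>\<eta>. V' (\<eta> (orig, y))) \<in> borel_measurable ?M1"
    using m1 sets2 by (simp cong: measurable_cong_sets)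
  have m3': "(\<lambda>\<eta>. V' (\<eta> (negs y, orig))) \<in> borel_measurable ?M"
    using m3 sets1 by (simp cong: measurable_cong_sets)
  have c1: "(\<lambda>\<eta>. clampr (real n) (V' (\<eta> (orig, y)))) \<in> borel_measurable ?M1" for n
    using measurable_compose[OF m1' borel_measurable_continuous_onI[OF clamp_cont]] .
  have c3: "(\<lambda>\<eta>. clampr (real n) (V' (\<eta> (negs y, orig)))) \<in> borel_measurable ?M" for n
    using measurable_compose[OF m3' borel_measurable_continuous_onI[OF clamp_cont]] .
  have eqg: "V' (\<eta> (negs y, orig)) = - V' (\<eta> (orig, negs y))" if "\<eta> \<in> space ?M" for \<eta>
  proof -
    have "\<eta> \<in> chi" using that spM by simp
    then have "\<eta> (negs y, orig) = - \<eta> (orig, negs y)" by (rule chi_antisym[OF _ b2])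
    then show ?thesis by (simp add: V'_odd)
  qed
  have i3: "integrable ?M (\<lambda>\<eta>. V' (\<eta> (negs y, orig)))"
  proof -
    have "integrable ?M (\<lambda>\<eta>. - V' (\<eta> (orig, negs y)))" using i2 by (rule integrable_minus)
    then show ?thesis by (subst Bochner_Integration.integrable_cong[OF refl eqg]) auto
  qed
  have int3: "(\<integral>\<eta>. V' (\<eta> (negs y, orig)) \<partial>?M) = - (\<integral>\<eta>. V' (\<eta> (orig, negs y)) \<partial>?M)"
  proof -
    have "(\<integral>\<eta>. V' (\<eta> (negs y, orig)) \<partial>?M) = (\<integral>\<eta>. - V' (\<eta> (orig, negs y)) \<partial>?M)"
      by (rule Bochner_Integration.integral_cong[OF refl eqg])
    then show ?thesis by simp
  qed
  have Fcb: "(\<lambda>\<eta>. clampr (real n) (V' (\<eta> (orig, y)))) \<in> Cb" for n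
    by (rule Cb_comp[OF m1 V'coord_cont clamp_cont clamp_bd]) simp
  have eqn: "(\<integral>\<eta>. clampr (real n) (V' (\<eta> (orig, y))) \<partial>?M1) = (\<integral>\<eta>. clampr (real n) (V' (\<eta> (negs y, orig))) \<partial>?M)" for n
    using cov Fcb[of n] by (simp add: sh)
  have l1: "(\<lambda>n. \<integral>\<eta>. clampr (real n) (V' (\<eta> (orig, y))) \<partial>?M1) \<longlonglongrightarrow> (\<integral>\<eta>. V' (\<eta> (orig, y)) \<partial>?M1)"
    by (rule integral_dominated_convergence[where w="\<lambda>\<eta>. \<bar>V' (\<eta> (orig, y))\<bar>", OF m1' c1 integrable_abs[OF i1]])
       (intro AE_I2 clamp_lim, intro AE_I2, simp add: clamp_abs)
  have l3: "(\<lambda>n. \<integral>\<eta>. clampr (real n) (V' (\<eta> (negs y, orig))) \<partial>?M) \<longlonglongrightarrow> (\<integral>\<eta>. V' (\<eta> (negs y, orig)) \<partial>?M)"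
    by (rule integral_dominated_convergence[where w="\<lambda>\<eta>. \<bar>V' (\<eta> (negs y, orig))\<bar>", OF m3' c3 integrable_abs[OF i3]])
       (intro AE_I2 clamp_lim, intro AE_I2, simp add: clamp_abs)
  have "(\<integral>\<eta>. V' (\<eta> (orig, y)) \<partial>?M1) = (\<integral>\<eta>. V' (\<eta> (negs y, orig)) \<partial>?M)"
    using l1 l3 by (simp add: eqn LIMSEQ_unique)
  then show ?thesis using int3 by simp
qed

end



context Vpot
begin

theorem main:
  fixes D :: "real measure"
  assumes D_prob: "prob_space D"
    and D_sets: "sets D = sets borel"
    and D_mean: "(\<integral>x. x \<partial>D) \<noteq> 0"
  shows "\<not> (\<exists>\<mu> :: ('d site \<Rightarrow> real) \<Rightarrow> ('d bond \<Rightarrow> real) measure.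
           shift_cov_random_GGM V D \<mu> \<and>
           (\<forall>b\<in>(bonds :: ('d::finite) bond set).
              (AE \<xi> in disorder D. integrable (\<mu> \<xi>) (\<lambda>\<eta>. V' (\<eta> b))) \<and>
              integrable (disorder D) (\<lambda>\<xi>. \<integral>\<eta>. V' (\<eta> b) \<partial>\<mu> \<xi>)))"
proof
  assume "\<exists>\<mu> :: ('d site \<Rightarrow> real) \<Rightarrow> ('d bond \<Rightarrow> real) measure.
           shift_cov_random_GGM V D \<mu> \<and>
           (\<forall>b\<in>(bonds :: ('d::finite) bond set).
              (AE \<xi> in disorder D. integrable (\<mu> \<xi>) (\<lambda>\<eta>. V' (\<eta> b))) \<and>
              integrable (disorder D) (\<lambda>\<xi>. \<integral>\<eta>. V' (\<eta> b) \<partial>\<mu> \<xi>))"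
  then obtain \<mu> :: "('d site \<Rightarrow> real) \<Rightarrow> ('d bond \<Rightarrow> real) measure" where
    SC: "shift_cov_random_GGM V D \<mu>" and
    bnd: "\<forall>b\<in>(bonds :: ('d::finite) bond set).
              (AE \<xi> in disorder D. integrable (\<mu> \<xi>) (\<lambda>\<eta>. V' (\<eta> b))) \<and>
              integrable (disorder D) (\<lambda>\<xi>. \<integral>\<eta>. V' (\<eta> b) \<partial>\<mu> \<xi>)"
    by blast
  define P where "P = (disorder D :: ('d site \<Rightarrow> real) measure)"
  have P_def': "P = PiM UNIV (\<lambda>_. D)" unfolding P_def disorder_def ..
  have PP: "prob_space P" unfolding P_def' by (rule prob_space_PiM) (rule D_prob)
  interpret P: prob_space P by (rule PP)
  have spD: "space D = UNIV" using sets_eq_imp_space_eq[OF D_sets] by simp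
  have spP: "space P = UNIV" unfolding P_def' space_PiM spD by simp
  have meas: "\<mu> \<in> measurable P (prob_algebra chi_M)"
    and AEG: "AE \<xi> in P. gradient_Gibbs V \<xi> (\<mu> \<xi>)"
    and cov: "\<And>\<xi> v. \<forall>F\<in>Cb. (\<integral>\<eta>. F \<eta> \<partial>\<mu> (shift_dis v \<xi>)) = (\<integral>\<eta>. F (shift_grad v \<eta>) \<partial>\<mu> \<xi>)"
    using SC unfolding shift_cov_random_GGM_def P_def by (auto simp: spP[unfolded P_def])
  have setsM: "sets (\<mu> \<xi>) = sets chi_M" for \<xi>
    using measurable_space[OF meas, of \<xi>] spP by (simp add: space_prob_algebra)
  define a where "a y \<xi> = (\<integral>\<eta>. V' (\<eta> (orig, y)) \<partial>\<mu> \<xi>)" for y \<xi>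
  have inta: "integrable P (a y)" if "y \<in> N0" for y
    using bnd orig_bond[OF that] unfolding a_def[abs_def] P_def by blast
  have AEi: "AE \<xi> in P. integrable (\<mu> \<xi>) (\<lambda>\<eta>. V' (\<eta> (orig, y)))" if "y \<in> N0" for y
    using bnd orig_bond[OF that] unfolding P_def by blast
  have AE1: "AE \<xi> in P. (\<Sum>y\<in>N0. a y \<xi>) = \<xi> orig / 2"
  proof -
    have "AE \<xi> in P. \<forall>y\<in>N0. integrable (\<mu> \<xi>) (\<lambda>\<eta>. V' (\<eta> (orig, y)))"
      by (rule AE_finite_allI[OF N0_finite]) (rule AEi)
    with AEG show ?thesis
    proof eventually_elim
      case (elim \<xi>)
      then have "(\<integral>\<eta>. GG \<eta> \<partial>\<mu> \<xi>) = \<xi> orig / 2" by (intro site_mean) auto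
      moreover have "(\<integral>\<eta>. GG \<eta> \<partial>\<mu> \<xi>) = (\<Sum>y\<in>N0. a y \<xi>)"
        unfolding GG_def a_def using elim by (intro Bochner_Integration.integral_sum) auto
      ultimately show ?case by simp
    qed
  qed
  have comp_meas: "(\<lambda>\<xi>. \<xi> orig) \<in> measurable P D"
    unfolding P_def' by (rule measurable_component_singleton) simp
  have idD: "(\<lambda>x::real. x) \<in> borel_measurable D"
    using D_sets by (simp cong: measurable_cong_sets)
  have Eorig: "(\<integral>\<xi>. \<xi> orig \<partial>P) = (\<integral>x. x \<partial>D)"
  proof -
    have "distr P D (\<lambda>\<xi>. \<xi> orig) = D"
      unfolding P_def' by (rule distr_PiM_component) (auto intro: D_prob)
    then have "(\<integral>x. x \<partial>D) = (\<integral>x. x \<partial>distr P D (\<lambda>\<xi>. \<xi> orig))" by simp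
    also have "\<dots> = (\<integral>\<xi>. \<xi> orig \<partial>P)" by (rule integral_distr[OF comp_meas idD])
    finally show ?thesis by simp
  qed
  have sum_eq: "(\<Sum>y\<in>N0. \<integral>\<xi>. a y \<xi> \<partial>P) = (\<integral>x. x \<partial>D) / 2"
  proof -
    have "(\<Sum>y\<in>N0. \<integral>\<xi>. a y \<xi> \<partial>P) = (\<integral>\<xi>. (\<Sum>y\<in>N0. a y \<xi>) \<partial>P)"
      using inta by (intro Bochner_Integration.integral_sum[symmetric]) auto
    also have "\<dots> = (\<integral>\<xi>. \<xi> orig / 2 \<partial>P)"
    proof (rule integral_cong_AE)
      show "(\<lambda>\<xi>. \<Sum>y\<in>N0. a y \<xi>) \<in> borel_measurable P"
        using inta by (intro borel_measurable_sum borel_measurable_integrable) auto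
      show "(\<lambda>\<xi>. \<xi> orig / 2) \<in> borel_measurable P"
        using measurable_compose[OF comp_meas idD] by simp
    qed (rule AE1)
    also have "\<dots> = (\<integral>x. x \<partial>D) / 2" by (simp add: Eorig)
    finally show ?thesis .
  qed
  have anti: "(\<integral>\<xi>. a y \<xi> \<partial>P) = - (\<integral>\<xi>. a (negs y) \<xi> \<partial>P)" if y: "y \<in> N0" for y
  proof -
    define s where "s = (shift_dis y :: ('d site \<Rightarrow> real) \<Rightarrow> ('d site \<Rightarrow> real))"
    have s_eq: "s = (\<lambda>\<omega>. \<lambda>n\<in>UNIV. \<omega> (vsub n y))"
      by (simp add: s_def shift_dis_def[abs_def] restrict_UNIV)
    have s_meas: "s \<in> measurable P P"
      unfolding s_eq P_def' by (intro measurable_restrict measurable_component_singleton) auto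
    have inj: "inj_on (\<lambda>n::'d site. vsub n y) UNIV"
      by (auto simp: inj_on_def vsub_def fun_eq_iff)
    have s_distr: "distr P P s = P"
      using distr_PiM_reindex[of UNIV "\<lambda>_. D" "\<lambda>n. vsub n y" UNIV] D_prob inj
      unfolding s_eq P_def' by simp
    have am: "a z \<in> borel_measurable P" if "z \<in> N0" for z
      using inta[OF that] by (rule borel_measurable_integrable)
    have "(\<integral>\<xi>. a y \<xi> \<partial>P) = (\<integral>\<xi>. a y \<xi> \<partial>distr P P s)" by (simp add: s_distr)
    also have "\<dots> = (\<integral>\<xi>. a y (s \<xi>) \<partial>P)" by (rule integral_distr[OF s_meas am[OF y]])
    also have "\<dots> = (\<integral>\<xi>. - a (negs y) \<xi> \<partial>P)"
    proof (rule integral_cong_AE)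
      show "(\<lambda>\<xi>. a y (s \<xi>)) \<in> borel_measurable P" using measurable_compose[OF s_meas am[OF y]] .
      show "(\<lambda>\<xi>. - a (negs y) \<xi>) \<in> borel_measurable P" using am[OF negs_N0[OF y]] by measurable
      have A1: "AE \<xi> in P. integrable (\<mu> (s \<xi>)) (\<lambda>\<eta>. V' (\<eta> (orig, y)))"
      proof -
        have "AE \<xi> in distr P P s. integrable (\<mu> \<xi>) (\<lambda>\<eta>. V' (\<eta> (orig, y)))"
          unfolding s_distr by (rule AEi[OF y])
        from AE_distrD[OF s_meas this] show ?thesis .
      qed
      show "AE \<xi> in P. a y (s \<xi>) = - a (negs y) \<xi>"
        using A1 AEi[OF negs_N0[OF y]]
      proof eventually_elim
        case (elim \<xi>)
        have "(\<integral>\<eta>. V' (\<eta> (orig, y)) \<partial>\<mu> (shift_dis y \<xi>)) = - (\<integral>\<eta>. V' (\<eta> (orig, negs y)) \<partial>\<mu> \<xi>)"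
          using shift_step[OF cov[of y \<xi>] setsM[of \<xi>] setsM[of "shift_dis y \<xi>"] y] elim by (simp add: s_def)
        then show ?case by (simp add: a_def s_def)
      qed
    qed
    also have "\<dots> = - (\<integral>\<xi>. a (negs y) \<xi> \<partial>P)" by simp
    finally show ?thesis .
  qed
  have "(\<Sum>y\<in>N0. \<integral>\<xi>. a y \<xi> \<partial>P) = (\<Sum>y\<in>N0. - (\<integral>\<xi>. a (negs y) \<xi> \<partial>P))"
    by (rule sum.cong) (auto simp: anti)
  also have "\<dots> = - (\<Sum>y\<in>N0. (\<integral>\<xi>. a (negs y) \<xi> \<partial>P))" by (simp add: sum_negf)
  also have "(\<Sum>y\<in>N0. (\<integral>\<xi>. a (negs y) \<xi> \<partial>P)) = (\<Sum>y\<in>N0. \<integral>\<xi>. a y \<xi> \<partial>P)"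
    by (rule sum.reindex_bij_betw[OF negs_bij])
  finally have "(\<Sum>y\<in>N0. \<integral>\<xi>. a y \<xi> \<partial>P) = 0" by simp
  then show False using sum_eq D_mean by simp
qed

end


theorem theorem1p2:
  fixes V V' V'' :: "real \<Rightarrow> real" and A B C2 :: real and D :: "real measure"
  assumes d3: "CARD('d::finite) \<ge> 3"
    and V_even: "\<forall>s. V (- s) = V s"
    and V_d1: "\<forall>s. (V has_real_derivative V' s) (at s)"
    and V_d2: "\<forall>s. (V' has_real_derivative V'' s) (at s)"
    and V_C2: "continuous_on UNIV V''"
    and A_pos: "A > 0"
    and V_lower: "\<forall>s. V s \<ge> A * s^2 - B"
    and C2_pos: "C2 > 0"
    and V_upper: "\<forall>s. V'' s \<le> C2"
    and D_prob: "prob_space D"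
    and D_sets: "sets D = sets borel"
    and D_2mom: "integrable D (\<lambda>x. x^2)"
    and D_2mom_nz: "(\<integral>x. x^2 \<partial>D) \<noteq> 0"
    and D_mean: "(\<integral>x. x \<partial>D) \<noteq> 0"
  shows "\<not> (\<exists>\<mu> :: ('d site \<Rightarrow> real) \<Rightarrow> ('d bond \<Rightarrow> real) measure.
           shift_cov_random_GGM V D \<mu> \<and>
           (\<forall>b\<in>(bonds :: 'd bond set).
              (AE \<xi> in disorder D. integrable (\<mu> \<xi>) (\<lambda>\<eta>. V' (\<eta> b))) \<and>
              integrable (disorder D) (\<lambda>\<xi>. \<integral>\<eta>. V' (\<eta> b) \<partial>\<mu> \<xi>)))"
proof -
  interpret Vpot V V' V'' A B C2
    by unfold_locales (use V_even V_d1 V_d2 A_pos V_lower V_upper C2_pos in auto)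
  show ?thesis by (rule main[OF D_prob D_sets D_mean])
qed

end
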